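(* For all indices $\mathbf k$ and $\mathbf l$, $\zeta^{t,*}_{\mathrm{shift}}(\mathbf k*\mathbf l;T)=\zeta^{t,*}_{\mathrm{shift}}(\mathbf k;T)\,\zeta^{t,*}_{\mathrm{shift}}(\mathbf l;T)$ in $\mathbb R[T][[t]]$.
   Context: $t,T$ are commuting indeterminates. An index is a finite tuple $\mathbf{k}=(k_1,\dots,k_r)$ of positive integers ($r\ge0$), $\mathrm{dep}(\mathbf k)=r$, $\mathrm{wt}(\mathbf k)=\sum k_i$; $\oplus$ is componentwise sum of tuples of equal length and $b\binom{\mathbf{k}}{\mathbf{l}}=\prod_{i}\binom{k_i+l_i-1}{l_i}$. Admissible: empty or $k_r\ge2$; $\zeta(\mathbf k)=\sum_{0<n_1<\cdots<n_r}n_1^{-k_1}\cdots n_r^{-k_r}$. $\mathfrak H=\mathbb Q\langle e_0,e_1\rangle$, $\mathfrak H^1=\mathbb Q+e_1\mathfrak H$, $\mathfrak H^0=\mathbb Q+e_1\mathfrak He_0$, $e_{\mathbf{k}}=e_1e_0^{k_1-1}\cdots e_1e_0^{k_r-1}$. The harmonic product $*$ on $\mathfrak H^1$: bilinear, $1*w=w*1=w$, $we_{(k)}*w'e_{(l)}=(we_{(k)}*w')e_{(l)}+(w*w'e_{(l)})e_{(k)}-(w*w')e_{(k+l)}$. It is transported to formal $\mathbb Q$-linear combinations of indices via the linear bijection $\mathbf k\mapsto(-1)^{\mathrm{dep}(\mathbf k)}e_{\mathbf k}$, and maps on indices are extended linearly. $Z^*_T:\mathfrak H^1\to\mathbb R[T]$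 is the unique $\mathbb Q$-algebra homomorphism for $*$ with $Z^*_T(e_{\mathbf k})=(-1)^{\mathrm{dep}(\mathbf k)}\zeta(\mathbf k)$ for admissible $\mathbf k$ and $Z^*_T(e_1)=-T$; $\zeta^*(\mathbf k;T)=(-1)^{\mathrm{dep}(\mathbf k)}Z^*_T(e_{\mathbf k})$. $\zeta^{t,*}_{\mathrm{shift}}(\mathbf{k};T)=\sum_{\mathbf n\in\mathbb Z_{\ge0}^{\mathrm{dep}(\mathbf k)}}b\binom{\mathbf k}{\mathbf n}\zeta^{*}(\mathbf k\oplus\mathbf n;T)(-t)^{\mathrm{wt}(\mathbf n)}$. *)

theory Defs
  imports "HOL-Analysis.Analysis" "HOL-Computational_Algebra.Polynomial"
    "HOL-Computational_Algebra.Formal_Power_Series"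
begin

text \<open>Formal Q-linear combinations of
  basis elements are represented as finite lists of (coefficient, index) pairs
  (read as the sum of the terms); maps are always extended linearly.\<close>

definition is_index :: "nat list \<Rightarrow> bool" where
  "is_index k \<longleftrightarrow> (\<forall>x\<in>set k. 0 < x)"

definition admissible :: "nat list \<Rightarrow> bool" where
  "admissible k \<longleftrightarrow> k = [] \<or> 2 \<le> last k"

definition mzv :: "nat list \<Rightarrow> real" where
  "mzv k = (\<Sum>\<^sub>\<infinity> n\<in>{n::nat list. length n = length k \<and> sorted_wrt (<) n \<and> (\<forall>x\<in>set n. 0 < x)}.
              \<Prod>i<length k. 1 / real (n ! i) ^ (k ! i))"

text \<open>Harmonic product of basis words e_k * e_l in H^1 (coefficients w.r.t. the
  basis e_m), computed on reversed lists: (a # k) stands for the word (rev k) e_a.\<close>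
fun hpr :: "nat list \<Rightarrow> nat list \<Rightarrow> (rat \<times> nat list) list" where
  "hpr [] l = [(1, l)]"
| "hpr k [] = [(1, k)]"
| "hpr (a # k) (b # l) =
     map (\<lambda>(c, m). (c, b # m)) (hpr (a # k) l)
   @ map (\<lambda>(c, m). (c, a # m)) (hpr k (b # l))
   @ map (\<lambda>(c, m). (- c, (a + b) # m)) (hpr k l)"

definition hp :: "nat list \<Rightarrow> nat list \<Rightarrow> (rat \<times> nat list) list" where
  "hp k l = map (\<lambda>(c, m). (c, rev m)) (hpr (rev k) (rev l))"

definition lin_poly :: "(nat list \<Rightarrow> real poly) \<Rightarrow> (rat \<times> nat list) list \<Rightarrow> real poly" where
  "lin_poly f xs = (\<Sum>(c, m)\<leftarrow>xs. smult (of_rat c) (f m))"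

definition Zstar :: "nat list \<Rightarrow> real poly" where
  "Zstar = (THE Z. (\<forall>k. \<not> is_index k \<longrightarrow> Z k = 0)
      \<and> Z [] = 1
      \<and> (\<forall>k. is_index k \<and> admissible k \<longrightarrow> Z k = (-1) ^ length k * [:mzv k:])
      \<and> Z [1] = - [:0, 1:]
      \<and> (\<forall>k l. is_index k \<and> is_index l \<longrightarrow> lin_poly Z (hp k l) = Z k * Z l))"

definition zeta_star :: "nat list \<Rightarrow> real poly" where
  "zeta_star k = (-1) ^ length k * Zstar k"

text \<open>Harmonic product of indices, transported via k \<mapsto> (-1)^dep(k) e_k.\<close>
definition stuffle :: "nat list \<Rightarrow> nat list \<Rightarrow> (rat \<times> nat list) list" where
  "stuffle k l = map (\<lambda>(c, m). ((-1) ^ (length k + length l + length m) * c, m)) (hp k l)"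

definition bcoef :: "nat list \<Rightarrow> nat list \<Rightarrow> nat" where
  "bcoef k n = (\<Prod>i<length k. (k ! i + n ! i - 1) choose (n ! i))"

definition oplus :: "nat list \<Rightarrow> nat list \<Rightarrow> nat list" where
  "oplus k n = map2 (+) k n"

definition zeta_shift :: "nat list \<Rightarrow> real poly fps" where
  "zeta_shift k = Abs_fps (\<lambda>m. \<Sum>n\<in>{n::nat list. length n = length k \<and> sum_list n = m}.
       of_nat (bcoef k n) * zeta_star (oplus k n) * (-1) ^ m)"

definition lin_shift :: "(rat \<times> nat list) list \<Rightarrow> real poly fps" where
  "lin_shift xs = (\<Sum>(c, m)\<leftarrow>xs. fps_const [:of_rat c:] * zeta_shift m)"

end

theory Submission
  imports Defs "HOL-Computational_Algebra.Fundamental_Theorem_Algebra" "HOL-Analysis.Harmonic_Numbers"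
begin

definition cC :: "nat \<Rightarrow> nat \<Rightarrow> nat" where "cC a i = (a + i - 1) choose i"

definition tw :: "nat \<Rightarrow> (nat \<Rightarrow> 'a::comm_ring_1 fps) \<Rightarrow> 'a fps" where
  "tw a Q = Abs_fps (\<lambda>d. \<Sum>i\<le>d. of_nat (cC a i) * fps_nth (Q i) (d - i))"

lemma tw_nth: "fps_nth (tw a Q) d = (\<Sum>i\<le>d. of_nat (cC a i) * fps_nth (Q i) (d - i))"
  by (simp add: tw_def)

lemma tw_add: "tw a (\<lambda>i. P i + Q i) = tw a P + tw a Q"
  by (rule fps_ext) (simp add: tw_nth algebra_simps sum.distrib)

lemma tw_diff: "tw a (\<lambda>i. P i - Q i) = tw a P - tw a Q"
  by (rule fps_ext) (simp add: tw_nth algebra_simps sum_subtractf)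

lemma tw_zero: "tw a (\<lambda>i. 0) = 0"
  by (rule fps_ext) (simp add: tw_nth)

lemma tw_sum_list: "tw a (\<lambda>i. \<Sum>x\<leftarrow>xs. f x i) = (\<Sum>x\<leftarrow>xs. tw a (f x))"
  by (induction xs) (simp_all add: tw_zero tw_add)

lemma swap_tri: "(\<Sum>i\<le>(d::nat). \<Sum>e\<le>d - i. f i e) = (\<Sum>e\<le>d. \<Sum>i\<le>d - e. (f i e :: 'a::comm_monoid_add))"
proof -
  have "(\<Sum>i\<le>d. \<Sum>e\<le>d - i. f i e) = (\<Sum>(i,e)\<in>{(i,e). i + e \<le> d}. f i e)"
    by (simp add: sum.Sigma) (rule sum.cong, auto)
  also have "\<dots> = (\<Sum>(e,i)\<in>{(e,i). e + i \<le> d}. f i e)"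
    by (rule sum.reindex_bij_witness[where i="\<lambda>(e,i). (i,e)" and j="\<lambda>(i,e). (e,i)"]) auto
  also have "\<dots> = (\<Sum>e\<le>d. \<Sum>i\<le>d - e. f i e)"
    by (simp add: sum.Sigma) (rule sum.cong, auto)
  finally show ?thesis .
qed


lemma tw_cmult: "tw a (\<lambda>i. c * Q i) = c * tw a Q"
proof (rule fps_ext)
  fix d
  have "fps_nth (tw a (\<lambda>i. c * Q i)) d =
     (\<Sum>i\<le>d. \<Sum>e\<le>d - i. of_nat (cC a i) * (fps_nth c e * fps_nth (Q i) (d - i - e)))"
    by (simp add: tw_nth fps_mult_nth atLeast0AtMost sum_distrib_left)
  also have "\<dots> = (\<Sum>e\<le>d. \<Sum>i\<le>d - e. of_nat (cC a i) * (fps_nth c e * fps_nth (Q i) (d - i - e)))"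
    by (rule swap_tri)
  also have "\<dots> = fps_nth (c * tw a Q) d"
    by (simp add: tw_nth fps_mult_nth atLeast0AtMost sum_distrib_left diff_diff_add algebra_simps)
  finally show "fps_nth (tw a (\<lambda>i. c * Q i)) d = fps_nth (c * tw a Q) d" .
qed

lemma tw_swap: "tw a (\<lambda>i. tw b (\<lambda>j. Q i j)) = tw b (\<lambda>j. tw a (\<lambda>i. Q i j))"
proof (rule fps_ext)
  fix d
  have "fps_nth (tw a (\<lambda>i. tw b (\<lambda>j. Q i j))) d =
     (\<Sum>i\<le>d. \<Sum>j\<le>d - i. of_nat (cC a i) * (of_nat (cC b j) * fps_nth (Q i j) (d - i - j)))"
    by (simp add: tw_nth sum_distrib_left)
  also have "\<dots> = (\<Sum>j\<le>d. \<Sum>i\<le>d - j. of_nat (cC a i) * (of_nat (cC b j) * fps_nth (Q i j) (d - i - j)))"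
    by (rule swap_tri)
  also have "\<dots> = fps_nth (tw b (\<lambda>j. tw a (\<lambda>i. Q i j))) d"
    by (simp add: tw_nth sum_distrib_left diff_diff_add algebra_simps)
  finally show "fps_nth (tw a (\<lambda>i. tw b (\<lambda>j. Q i j))) d = fps_nth (tw b (\<lambda>j. tw a (\<lambda>i. Q i j))) d" .
qed

lemma cC_real: "(of_nat (cC a i) :: real) = (-1) ^ i * ((- of_nat a) gchoose i)"
proof -
  have "((- of_nat a) gchoose i :: real) = (-1) ^ i * ((of_nat i + of_nat a - 1) gchoose i)"
    using gbinomial_negated_upper[of "- of_nat a :: real" i] by (simp add: algebra_simps)
  then have "(-1) ^ i * ((- of_nat a) gchoose i :: real) = ((of_nat i + of_nat a - 1) gchoose i)"
    by (simp flip: power_mult_distrib)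
  moreover have "(of_nat (cC a i) :: real) = ((of_nat i + of_nat a - 1) gchoose i)"
  proof (cases "a + i = 0")
    case True then show ?thesis by (simp add: cC_def)
  next
    case False
    then have "real (a + i - 1) = of_nat i + of_nat a - 1" by auto
    then show ?thesis unfolding cC_def binomial_gbinomial by simp
  qed
  ultimately show ?thesis by simp
qed

lemma cC_vandermonde: "(\<Sum>i\<le>w. cC a i * cC b (w - i)) = cC (a + b) w"
proof -
  have "(\<Sum>i\<le>w. real (cC a i) * real (cC b (w - i))) = real (cC (a + b) w)"
  proof -
    have "(\<Sum>i\<le>w. real (cC a i) * real (cC b (w - i))) =
       (\<Sum>i\<le>w. (-1) ^ w * (((- of_nat a) gchoose i) * ((- of_nat b) gchoose (w - i))))"
    proof (rule sum.cong)
      fix i assume "i \<in> {..w}"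
      then have "(-1::real) ^ i * (-1) ^ (w - i) = (-1) ^ w" by (simp flip: power_add)
      then show "real (cC a i) * real (cC b (w - i)) = (-1) ^ w * (((- of_nat a) gchoose i) * ((- of_nat b) gchoose (w - i)))"
        by (simp add: cC_real)
    qed simp
    also have "\<dots> = (-1) ^ w * ((- of_nat a - of_nat b) gchoose w)"
      using gbinomial_Vandermonde[of "- of_nat a :: real" "- of_nat b" w]
      unfolding atLeast0AtMost sum_distrib_left[symmetric] by simp
    also have "\<dots> = real (cC (a + b) w)" by (simp add: cC_real)
    finally show ?thesis .
  qed
  then have "real (\<Sum>i\<le>w. cC a i * cC b (w - i)) = real (cC (a + b) w)" by simp
  then show ?thesis by (simp only: of_nat_eq_iff)
qed

lemma tw_vandermonde: "tw a (\<lambda>i. tw b (\<lambda>j. Q (i + j))) = tw (a + b) Q"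
proof (rule fps_ext)
  fix d
  have "fps_nth (tw a (\<lambda>i. tw b (\<lambda>j. Q (i + j)))) d =
     (\<Sum>i\<le>d. \<Sum>j\<le>d - i. of_nat (cC a i) * (of_nat (cC b j) * fps_nth (Q (i + j)) (d - (i + j))))"
    by (simp add: tw_nth sum_distrib_left diff_diff_add)
  also have "\<dots> = (\<Sum>(i,j)\<in>{(i,j). i + j \<le> d}. of_nat (cC a i) * (of_nat (cC b j) * fps_nth (Q (i + j)) (d - (i + j))))"
    by (simp add: sum.Sigma) (rule sum.cong, auto)
  also have "\<dots> = (\<Sum>w\<le>d. \<Sum>i\<le>w. of_nat (cC a i) * (of_nat (cC b (w - i)) * fps_nth (Q w) (d - w)))"
    by (subst sum.triangle_reindex_eq) (rule sum.cong, simp_all)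
  also have "\<dots> = (\<Sum>w\<le>d. of_nat (\<Sum>i\<le>w. cC a i * cC b (w - i)) * fps_nth (Q w) (d - w))"
    by (rule sum.cong) (simp_all add: sum_distrib_right mult.assoc)
  also have "\<dots> = fps_nth (tw (a + b) Q) d"
    by (simp add: cC_vandermonde tw_nth)
  finally show "fps_nth (tw a (\<lambda>i. tw b (\<lambda>j. Q (i + j)))) d = fps_nth (tw (a + b) Q) d" .
qed


fun psi :: "(nat list \<Rightarrow> 'a::comm_ring_1 fps) \<Rightarrow> nat list \<Rightarrow> 'a fps" where
  "psi Y [] = Y []"
| "psi Y (a # r) = tw a (\<lambda>i. psi (\<lambda>u. Y ((a + i) # u)) r)"

lemma psi_add: "psi (\<lambda>u. F u + G u) r = psi F r + psi G r"
  by (induction r arbitrary: F G) (simp_all add: tw_add)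

lemma psi_diff: "psi (\<lambda>u. F u - G u) r = psi F r - psi G r"
  by (induction r arbitrary: F G) (simp_all add: tw_diff)

lemma psi_zero: "psi (\<lambda>u. 0) r = 0"
  by (induction r) (simp_all add: tw_zero)

lemma psi_sum_list: "psi (\<lambda>u. \<Sum>x\<leftarrow>xs. f x u) r = (\<Sum>x\<leftarrow>xs. psi (f x) r)"
  by (induction xs) (simp_all add: psi_zero psi_add)

lemma psi_cmult: "psi (\<lambda>u. c * F u) r = c * psi F r"
  by (induction r arbitrary: F) (simp_all add: tw_cmult)

lemma psi_tw: "psi (\<lambda>u. tw b (\<lambda>j. Q j u)) r = tw b (\<lambda>j. psi (Q j) r)"
proof (induction r arbitrary: Q)
  case Nil then show ?case by simp
next
  case (Cons a r)
  have "psi (\<lambda>u. tw b (\<lambda>j. Q j u)) (a # r) = tw a (\<lambda>i. tw b (\<lambda>j. psi (\<lambda>u. Q j ((a + i) # u)) r))"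
    using Cons.IH[of "\<lambda>j u. Q j ((a + _) # u)"] by simp
  also have "\<dots> = tw b (\<lambda>j. tw a (\<lambda>i. psi (\<lambda>u. Q j ((a + i) # u)) r))" by (rule tw_swap)
  finally show ?case by simp
qed

definition kap :: "rat \<Rightarrow> real poly fps" where "kap c = fps_const [:of_rat c:]"

definition Zh :: "(nat list \<Rightarrow> real poly fps) \<Rightarrow> nat list \<Rightarrow> nat list \<Rightarrow> real poly fps" where
  "Zh Y u v = (\<Sum>(c, m)\<leftarrow>hpr u v. kap c * Y m)"

lemma hpr_Nil2: "hpr u [] = [(1, u)]"
  by (cases u) simp_all

lemma kap_1 [simp]: "kap 1 = 1" by (simp add: kap_def)
lemma kap_neg: "kap (- c) = - kap c" by (simp add: kap_def of_rat_minus)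

lemma sum_list_map_neg: "(\<Sum>(c, m)\<leftarrow>map (\<lambda>(c, m). (- c, f m)) xs. kap c * g m) = - (\<Sum>(c, m)\<leftarrow>xs. kap c * g (f m))"
  by (induction xs) (auto simp: kap_neg)

lemma sum_list_map_cons: "(\<Sum>(c, m)\<leftarrow>map (\<lambda>(c, m). (c, f m)) xs. h c m) = (\<Sum>(c, m)\<leftarrow>xs. h c (f m))"
  by (induction xs) auto

lemma Zh_cons: "Zh Y (x # u) (y # v) = Zh (\<lambda>m. Y (y # m)) (x # u) v + Zh (\<lambda>m. Y (x # m)) u (y # v)
   - Zh (\<lambda>m. Y ((x + y) # m)) u v"
  unfolding Zh_def by (simp only: hpr.simps map_append sum_list_append sum_list_map_neg sum_list_map_cons) simp

lemma sum_tw: "(\<Sum>(c, m)\<leftarrow>xs. kap c * tw a (\<lambda>j. Q j m)) = tw a (\<lambda>j. \<Sum>(c, m)\<leftarrow>xs. kap c * Q j m)"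
  by (induction xs) (auto simp: tw_zero tw_add tw_cmult)

theorem psi_hom_formal:
  "(\<Sum>(c, m)\<leftarrow>hpr r s. kap c * psi Y m) = psi (\<lambda>u. psi (\<lambda>v. Zh Y u v) s) r"
proof (induction r s arbitrary: Y rule: hpr.induct)
  case (1 l)
  then show ?case by (simp add: Zh_def)
next
  case (2 v va)
  have "(\<lambda>u. psi (\<lambda>v. Zh Y u v) []) = Y" by (rule ext) (simp add: Zh_def hpr_Nil2)
  then show ?case by simp
next
  case (3 a k b l)
  define Ys where "Ys \<beta> = (\<lambda>m. Y (\<beta> # m))" for \<beta>
  have L: "(\<Sum>(c, m)\<leftarrow>hpr (a # k) (b # l). kap c * psi Y m) =
      tw b (\<lambda>j. \<Sum>(c, m)\<leftarrow>hpr (a # k) l. kap c * psi (Ys (b + j)) m)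
    + tw a (\<lambda>i. \<Sum>(c, m)\<leftarrow>hpr k (b # l). kap c * psi (Ys (a + i)) m)
    - tw (a + b) (\<lambda>w. \<Sum>(c, m)\<leftarrow>hpr k l. kap c * psi (Ys (a + b + w)) m)"
    by (simp only: hpr.simps(3) map_append sum_list_append sum_list_map_neg sum_list_map_cons psi.simps(2) sum_tw) (simp add: Ys_def add_ac)
  have R: "psi (\<lambda>u. psi (\<lambda>v. Zh Y u v) (b # l)) (a # k) =
     tw a (\<lambda>i. psi (\<lambda>u. tw b (\<lambda>j. psi (\<lambda>v. Zh (Ys (b + j)) ((a + i) # u) v) l)) k)
   + tw a (\<lambda>i. psi (\<lambda>u. tw b (\<lambda>j. psi (\<lambda>v. Zh (Ys (a + i)) u ((b + j) # v)) l)) k)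
   - tw a (\<lambda>i. psi (\<lambda>u. tw b (\<lambda>j. psi (\<lambda>v. Zh (Ys (a + b + (i + j))) u v) l)) k)"
    by (simp add: Zh_cons psi_add psi_diff tw_add tw_diff Ys_def add_ac)
  have R1: "tw a (\<lambda>i. psi (\<lambda>u. tw b (\<lambda>j. psi (\<lambda>v. Zh (Ys (b + j)) ((a + i) # u) v) l)) k)
     = tw b (\<lambda>j. psi (\<lambda>u. psi (\<lambda>v. Zh (Ys (b + j)) u v) l) (a # k))"
    by (simp add: psi_tw tw_swap[of a b])
  have R2: "tw a (\<lambda>i. psi (\<lambda>u. tw b (\<lambda>j. psi (\<lambda>v. Zh (Ys (a + i)) u ((b + j) # v)) l)) k)
     = tw a (\<lambda>i. psi (\<lambda>u. psi (\<lambda>v. Zh (Ys (a + i)) u v) (b # l)) k)"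
    by simp
  have R3: "tw a (\<lambda>i. psi (\<lambda>u. tw b (\<lambda>j. psi (\<lambda>v. Zh (Ys (a + b + (i + j))) u v) l)) k)
     = tw (a + b) (\<lambda>w. psi (\<lambda>u. psi (\<lambda>v. Zh (Ys (a + b + w)) u v) l) k)"
    by (simp add: psi_tw tw_vandermonde[of a b "\<lambda>w. psi (\<lambda>u. psi (\<lambda>v. Zh (Ys (a + b + w)) u v) l) k"])
  show ?case
    unfolding L R R1 R2 R3 using "3.IH" by simp
qed

definition pos :: "nat list \<Rightarrow> bool" where "pos r \<longleftrightarrow> (\<forall>x\<in>set r. 0 < x)"

lemma pos_Cons[simp]: "pos (a # r) \<longleftrightarrow> 0 < a \<and> pos r" by (simp add: pos_def)
lemma pos_Nil[simp]: "pos []" by (simp add: pos_def)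
lemma pos_rev[simp]: "pos (rev r) = pos r" by (simp add: pos_def)
lemma is_index_pos: "is_index k = pos k" by (simp add: pos_def is_index_def)

lemma psi_cong: "pos r \<Longrightarrow> (\<And>u. pos u \<Longrightarrow> F u = F' u) \<Longrightarrow> psi F r = psi F' r"
proof (induction r arbitrary: F F')
  case Nil then show ?case by simp
next
  case (Cons a r)
  have "\<And>i. psi (\<lambda>u. F ((a + i) # u)) r = psi (\<lambda>u. F' ((a + i) # u)) r"
    using Cons by (intro Cons.IH) auto
  then show ?case by simp
qed

definition NN :: "nat \<Rightarrow> nat \<Rightarrow> nat list set" where
  "NN L d = {n. length n = L \<and> sum_list n = d}"

lemma finite_NN: "finite (NN L d)"
proof -
  have "NN L d \<subseteq> {n. set n \<subseteq> {..d} \<and> length n = L}"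
    unfolding NN_def by (auto simp: member_le_sum_list)
  moreover have "finite {n. set n \<subseteq> {..d} \<and> length n = L}"
    by (rule finite_lists_length_eq) simp
  ultimately show ?thesis by (rule finite_subset)
qed

lemma NN_Suc: "NN (Suc L) d = (\<lambda>(i, n). i # n) ` (SIGMA i:{..d}. NN L (d - i))"
proof (rule set_eqI)
  fix x show "x \<in> NN (Suc L) d \<longleftrightarrow> x \<in> (\<lambda>(i, n). i # n) ` (SIGMA i:{..d}. NN L (d - i))"
    by (cases x) (auto simp: NN_def image_iff)
qed

lemma bcoef_Cons: "bcoef (a # r) (i # n) = cC a i * bcoef r n"
  unfolding bcoef_def cC_def length_Cons prod.lessThan_Suc_shift by simp

lemma oplus_Cons: "oplus (a # r) (i # n) = (a + i) # oplus r n"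
  by (simp add: oplus_def)

lemma psi_nth: "fps_nth (psi (\<lambda>u. fps_const (g u)) r) d =
   (\<Sum>n\<in>NN (length r) d. of_nat (bcoef r n) * g (oplus r n))"
proof (induction r arbitrary: g d)
  case Nil
  have "NN 0 d = (if d = 0 then {[]} else {})" by (auto simp: NN_def)
  then show ?case by (simp add: bcoef_def oplus_def)
next
  case (Cons a r)
  have "fps_nth (psi (\<lambda>u. fps_const (g u)) (a # r)) d =
     (\<Sum>i\<le>d. of_nat (cC a i) * (\<Sum>n\<in>NN (length r) (d - i). of_nat (bcoef r n) * g ((a + i) # oplus r n)))"
    by (simp add: tw_nth Cons.IH)
  also have "\<dots> = (\<Sum>i\<le>d. \<Sum>n\<in>NN (length r) (d - i). of_nat (bcoef (a # r) (i # n)) * g (oplus (a # r) (i # n)))"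
    by (simp add: sum_distrib_left bcoef_Cons oplus_Cons mult.assoc)
  also have "\<dots> = (\<Sum>(i, n)\<in>(SIGMA i:{..d}. NN (length r) (d - i)). of_nat (bcoef (a # r) (i # n)) * g (oplus (a # r) (i # n)))"
    by (rule sum.Sigma) (auto simp: finite_NN)
  also have "\<dots> = (\<Sum>n\<in>NN (length (a # r)) d. of_nat (bcoef (a # r) n) * g (oplus (a # r) n))"
    by (simp add: NN_Suc sum.reindex inj_on_def case_prod_unfold)
  finally show ?case .
qed


lemma bcoef_rev: "length n = length k \<Longrightarrow> bcoef (rev k) (rev n) = bcoef k n"
proof -
  assume len: "length n = length k"
  have "bcoef (rev k) (rev n) = (\<Prod>i<length k. (\<lambda>j. (k ! j + n ! j - 1) choose (n ! j)) (length k - Suc i))"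
    unfolding bcoef_def by (rule prod.cong) (auto simp: rev_nth len)
  also have "\<dots> = bcoef k n" unfolding bcoef_def by (rule prod.nat_diff_reindex)
  finally show ?thesis .
qed

lemma oplus_rev: "length n = length k \<Longrightarrow> oplus (rev k) (rev n) = rev (oplus k n)"
  by (simp add: oplus_def zip_rev rev_map)

lemma length_oplus[simp]: "length (oplus k n) = min (length k) (length n)"
  by (simp add: oplus_def)

lemma NN_rev_sum: "(\<Sum>n\<in>NN L d. f (rev n)) = (\<Sum>n\<in>NN L d. f n)"
  by (rule sum.reindex_bij_witness[where i=rev and j=rev]) (auto simp: NN_def)

definition sg :: "'a::comm_ring_1 fps \<Rightarrow> 'a fps" where
  "sg f = Abs_fps (\<lambda>d. (-1) ^ d * fps_nth f d)"

lemma sg_nth: "fps_nth (sg f) d = (-1) ^ d * fps_nth f d" by (simp add: sg_def)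

lemma sg_mult: "sg (f * g) = sg f * sg g"
proof (rule fps_ext)
  fix d
  have "\<And>i. i \<in> {0..d} \<Longrightarrow> (-1) ^ d * (fps_nth f i * fps_nth g (d - i)) =
      (-1) ^ i * fps_nth f i * ((-1) ^ (d - i) * fps_nth g (d - i))"
  proof -
    fix i assume "i \<in> {0..d}"
    then have "((-1) ^ i * (-1) ^ (d - i) :: 'a) = (-1) ^ d" by (simp flip: power_add)
    then show "(-1) ^ d * (fps_nth f i * fps_nth g (d - i)) =
      (-1) ^ i * fps_nth f i * ((-1) ^ (d - i) * fps_nth g (d - i))"
      by (metis (no_types, lifting) mult.assoc mult.left_commute)
  qed
  then show "fps_nth (sg (f * g)) d = fps_nth (sg f * sg g) d"
    by (simp add: sg_nth fps_mult_nth sum_distrib_left)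
qed

lemma sg_add: "sg (f + g) = sg f + sg g" by (rule fps_ext) (simp add: sg_nth algebra_simps)
lemma sg_zero: "sg 0 = 0" by (rule fps_ext) (simp add: sg_nth)
lemma sg_const_mult: "sg (fps_const c * f) = fps_const c * sg f"
  by (rule fps_ext) (simp add: sg_nth algebra_simps)

definition YZ :: "nat list \<Rightarrow> real poly fps" where "YZ u = fps_const (Zstar (rev u))"

lemma zeta_shift_psi: "zeta_shift k = fps_const ((-1) ^ length k) * sg (psi YZ (rev k))"
proof (rule fps_ext)
  fix d
  have "fps_nth (psi YZ (rev k)) d = (\<Sum>n\<in>NN (length k) d. of_nat (bcoef (rev k) n) * Zstar (rev (oplus (rev k) n)))"
    unfolding YZ_def using psi_nth[of "\<lambda>u. Zstar (rev u)" "rev k" d] by simp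
  also have "\<dots> = (\<Sum>n\<in>NN (length k) d. of_nat (bcoef (rev k) (rev n)) * Zstar (rev (oplus (rev k) (rev n))))"
    by (rule NN_rev_sum[symmetric])
  also have "\<dots> = (\<Sum>n\<in>NN (length k) d. of_nat (bcoef k n) * Zstar (oplus k n))"
    by (rule sum.cong) (auto simp: NN_def bcoef_rev oplus_rev)
  finally have P: "fps_nth (psi YZ (rev k)) d = (\<Sum>n\<in>NN (length k) d. of_nat (bcoef k n) * Zstar (oplus k n))" .
  have "fps_nth (zeta_shift k) d = (\<Sum>n\<in>NN (length k) d. of_nat (bcoef k n) * zeta_star (oplus k n) * (-1) ^ d)"
    by (simp add: zeta_shift_def NN_def)
  also have "\<dots> = (-1) ^ length k * ((-1) ^ d * (\<Sum>n\<in>NN (length k) d. of_nat (bcoef k n) * Zstar (oplus k n)))"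
    by (simp add: sum_distrib_left zeta_star_def NN_def algebra_simps)
  finally show "fps_nth (zeta_shift k) d = fps_nth (fps_const ((-1) ^ length k) * sg (psi YZ (rev k))) d"
    by (simp add: sg_nth P)
qed

definition LF :: "(nat list \<Rightarrow> real) \<Rightarrow> (rat \<times> nat list) list \<Rightarrow> real" where
  "LF X xs = (\<Sum>(c, m)\<leftarrow>xs. of_rat c * X m)"

lemma LF_A: "(\<Sum>(c, m)\<leftarrow>map (\<lambda>(c, m). (c, f m)) xs. of_rat c * X m) = (\<Sum>(c, m)\<leftarrow>xs. of_rat c * (X (f m) :: real))"
  by (induction xs) auto
lemma LF_B: "(\<Sum>(c, m)\<leftarrow>map (\<lambda>(c, m). (- c, f m)) xs. of_rat c * X m) = - (\<Sum>(c, m)\<leftarrow>xs. of_rat c * (X (f m) :: real))"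
  by (induction xs) (auto simp: of_rat_minus)

lemma sum_list_zero_map: "(\<And>x. x \<in> set xs \<Longrightarrow> f x = 0) \<Longrightarrow> sum_list (map f xs) = (0::'a::monoid_add)"
  by (induction xs) auto

lemma LF_cons: "LF X (hpr (x # u) (y # v)) = LF (\<lambda>m. X (y # m)) (hpr (x # u) v) + LF (\<lambda>m. X (x # m)) (hpr u (y # v))
   - LF (\<lambda>m. X ((x + y) # m)) (hpr u v)"
  unfolding LF_def by (simp only: hpr.simps map_append sum_list_append LF_A LF_B)

declare hpr.simps(3)[simp del]

lemma LF_lin: "LF (\<lambda>m. A m - c * B m) xs = LF A xs - c * LF B xs"
  by (induction xs) (auto simp: LF_def algebra_simps)

lemma hpr_Nil_out: assumes h: "(c, []) \<in> set (hpr r s)" shows "r = [] \<and> s = []"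
proof (cases r)
  case (Cons a k)
  then show ?thesis using h
  proof (cases s)
    case (Cons b l)
    have "(c, []) \<notin> set (hpr (a # k) (b # l))"
      unfolding hpr.simps(3) set_append set_map by auto
    then show ?thesis using h \<open>r = a # k\<close> Cons by simp
  qed (auto simp: hpr_Nil2)
qed (use h in auto)

lemma hpr_pos: "pos r \<Longrightarrow> pos s \<Longrightarrow> (c, m) \<in> set (hpr r s) \<Longrightarrow> pos m"
proof (induction r s arbitrary: c m rule: hpr.induct)
  case (1 l) then show ?case by simp
next
  case (2 v va) then show ?case by simp
next
  case (3 a k b l)
  from "3.prems"(3) consider
      (A) m' where "m = b # m'" "(c, m') \<in> set (hpr (a # k) l)"
    | (B) m' where "m = a # m'" "(c, m') \<in> set (hpr k (b # l))"
    | (C) c' m' where "m = (a + b) # m'" "(c', m') \<in> set (hpr k l)"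
    unfolding hpr.simps(3) set_append set_map by (elim UnE imageE) (auto split: prod.splits)
  then show ?case
  proof cases
    case A then show ?thesis using "3.IH"(1)[of c m'] "3.prems" by simp
  next
    case B then show ?thesis using "3.IH"(2)[of c m'] "3.prems" by simp
  next
    case C then show ?thesis using "3.IH"(3)[of c' m'] "3.prems" by simp
  qed
qed

fun G :: "nat \<Rightarrow> nat list \<Rightarrow> real" where
  "G N [] = 1"
| "G N (a # r) = (\<Sum>m\<in>{1..<N}. G m r / real m ^ a)"

definition FF :: "nat \<Rightarrow> nat list \<Rightarrow> real" where "FF N r = (-1) ^ length r * G N r"

definition ww :: "nat \<Rightarrow> nat \<Rightarrow> real" where "ww N a = (if N = 0 then 0 else 1 / real N ^ a)"

lemma ww_add: "ww N (a + b) = ww N a * ww N b"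
  by (simp add: ww_def power_add)

lemma G_Suc: "G (Suc N) (a # r) = G N (a # r) + ww N a * G N r"
proof (cases N)
  case 0 then show ?thesis by (simp add: ww_def)
next
  case (Suc M)
  then have e: "{1..<Suc N} = insert N {1..<N}" by auto
  have "G (Suc N) (a # r) = (\<Sum>m\<in>insert N {1..<N}. G m r / real m ^ a)"
    by (simp only: G.simps e)
  also have "\<dots> = G N r / real N ^ a + G N (a # r)"
    by (simp only: G.simps) (rule sum.insert, auto)
  finally show ?thesis using Suc by (simp add: ww_def)
qed

lemma FF_Suc: "FF (Suc N) (a # r) = FF N (a # r) - ww N a * FF N r"
  by (simp add: FF_def G_Suc algebra_simps del: G.simps)

lemma FF_Nil[simp]: "FF N [] = 1" by (simp add: FF_def)

lemma FF_0: "FF 0 r = (if r = [] then 1 else 0)"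
  by (cases r) (simp_all add: FF_def)

lemma LF_Nil1: "LF X (hpr [] s) = X s" by (simp add: LF_def)
lemma LF_Nil2: "LF X (hpr r []) = X r" by (simp add: LF_def hpr_Nil2)

lemma trunc_hom: "LF (FF N) (hpr r s) = FF N r * FF N s"
proof (induction N arbitrary: r s)
  case 0
  show ?case
  proof (cases "r = [] \<and> s = []")
    case True then show ?thesis by (simp add: LF_def)
  next
    case False
    have "LF (FF 0) (hpr r s) = 0"
      unfolding LF_def using False hpr_Nil_out
      by (intro sum_list_zero_map) (auto simp: FF_0)
    moreover have "FF 0 r * FF 0 s = 0" using False by (auto simp: FF_0)
    ultimately show ?thesis by simp
  qed
next
  case (Suc N)
  show ?case
  proof (cases r)
    case Nil then show ?thesis by (simp add: LF_def)
  next
    case (Cons a k)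
    show ?thesis
    proof (cases s)
      case Nil then show ?thesis by (simp add: LF_def hpr_Nil2 \<open>r = a # k\<close> del: hpr.simps)
    next
      case (Cons b l)
      have "LF (FF (Suc N)) (hpr (a # k) (b # l)) =
          (LF (\<lambda>m. FF N (b # m)) (hpr (a # k) l) - ww N b * LF (FF N) (hpr (a # k) l))
        + (LF (\<lambda>m. FF N (a # m)) (hpr k (b # l)) - ww N a * LF (FF N) (hpr k (b # l)))
        - (LF (\<lambda>m. FF N ((a + b) # m)) (hpr k l) - ww N (a + b) * LF (FF N) (hpr k l))"
        by (simp only: LF_cons FF_Suc LF_lin)
      also have "\<dots> = LF (FF N) (hpr (a # k) (b # l))
          - ww N b * LF (FF N) (hpr (a # k) l) - ww N a * LF (FF N) (hpr k (b # l))
          + ww N (a + b) * LF (FF N) (hpr k l)"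
        unfolding LF_cons[of "FF N" a k b l] by simp
      also have "\<dots> = (FF N (a # k) - ww N a * FF N k) * (FF N (b # l) - ww N b * FF N l)"
        unfolding Suc.IH ww_add by (simp add: algebra_simps del: hpr.simps)
      also have "\<dots> = FF (Suc N) r * FF (Suc N) s"
        by (simp only: FF_Suc \<open>r = a # k\<close> \<open>s = b # l\<close>)
      finally show ?thesis by (simp only: \<open>r = a # k\<close> \<open>s = b # l\<close>)
    qed
  qed
qed

fun lead :: "nat list \<Rightarrow> nat" where
  "lead [] = 0"
| "lead (x # r) = (if x = 1 then Suc (lead r) else 0)"

lemma hpr_one: "hpr (a # k) [1] = (1, 1 # a # k) # map (\<lambda>(c, m). (c, a # m)) (hpr k [1]) @ [(-1, (a + 1) # k)]"
  by (simp add: hpr.simps(3) hpr_Nil2)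

lemma hpr_one_lead: "pos w \<Longrightarrow> (c, m) \<in> set (hpr w [1]) \<Longrightarrow> m \<noteq> 1 # w \<Longrightarrow> lead m \<le> lead w"
proof (induction w arbitrary: c m)
  case Nil then show ?case by simp
next
  case (Cons a k)
  from Cons.prems(2) consider "m = 1 # a # k" | m' where "m = a # m'" "(c, m') \<in> set (hpr k [1])"
    | "m = (a + 1) # k"
    unfolding hpr_one by auto
  then show ?case
  proof cases
    case 1 then show ?thesis using Cons.prems by simp
  next
    case 2
    show ?thesis
    proof (cases "a = 1")
      case True
      then have "m' \<noteq> 1 # k" using 2 Cons.prems by auto
      then have "lead m' \<le> lead k" using Cons.IH[of c m'] 2 Cons.prems by simp
      then show ?thesis using 2 True by simp
    next
      case False then show ?thesis using 2 by simp
    qed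
  next
    case 3 then show ?thesis using Cons.prems by simp
  qed
qed

lemma hpr_one_count: "pos w \<Longrightarrow> sum_list (map fst (filter (\<lambda>(c, m). m = 1 # w) (hpr w [1]))) = of_nat (Suc (lead w))"
proof (induction w)
  case Nil then show ?case by simp
next
  case (Cons a k)
  have e: "filter (\<lambda>(c, m). m = 1 # a # k) (map (\<lambda>(c, m). (c, a # m)) (hpr k [1])) =
     map (\<lambda>(c, m). (c, a # m)) (filter (\<lambda>(c, m). a = 1 \<and> m = 1 # k) (hpr k [1]))"
    by (cases "a = 1") (auto simp: filter_map o_def case_prod_unfold intro!: filter_cong)
  have mf: "map fst (map (\<lambda>(c, m). (c, a # m)) xs) = map fst xs" for xs :: "(rat \<times> nat list) list"
    by (induction xs) auto
  have a0: "a + 1 \<noteq> 1" using Cons.prems by simp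
  have S: "sum_list (map fst (filter (\<lambda>(c, m). m = 1 # a # k) (hpr (a # k) [1]))) =
     1 + sum_list (map fst (filter (\<lambda>(c, m). a = 1 \<and> m = 1 # k) (hpr k [1])))"
    unfolding hpr_one using a0 by (simp only: filter.simps filter_append e mf) (simp add: case_prod_unfold o_def)
  show ?case
  proof (cases "a = 1")
    case True
    have "filter (\<lambda>(c, m). a = 1 \<and> m = 1 # k) (hpr k [1]) = filter (\<lambda>(c, m). m = 1 # k) (hpr k [1])"
      using True by simp
    then show ?thesis using S Cons True by simp
  next
    case False
    then show ?thesis using S by simp
  qed
qed

lemma sum_list_filter_split: "sum_list (map f xs) = sum_list (map f (filter P xs)) + sum_list (map f (filter (\<lambda>x. \<not> P x) xs))"
  for f :: "'b \<Rightarrow> 'a::ab_group_add"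
  by (induction xs) (auto simp: algebra_simps)

lemma hpr_one_split:
  fixes f :: "rat \<Rightarrow> nat list \<Rightarrow> 'a::ab_group_add"
  assumes add: "\<And>c1 c2 m. f (c1 + c2) m = f c1 m + f c2 m" and pw: "pos w"
  shows "(\<Sum>(c, m)\<leftarrow>hpr w [1]. f c m) = f (of_nat (Suc (lead w))) (1 # w)
     + (\<Sum>(c, m)\<leftarrow>filter (\<lambda>(c, m). m \<noteq> 1 # w) (hpr w [1]). f c m)"
proof -
  have f0: "f 0 m = 0" for m using add[of 0 0 m] by simp
  have g: "(\<Sum>(c, m)\<leftarrow>xs. f c m) = f (sum_list (map fst xs)) (1 # w)" if "\<forall>x\<in>set xs. snd x = 1 # w" for xs
    using that by (induction xs) (auto simp: f0 add)
  have "(\<Sum>(c, m)\<leftarrow>hpr w [1]. f c m) = (\<Sum>(c, m)\<leftarrow>filter (\<lambda>(c, m). m = 1 # w) (hpr w [1]). f c m)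
     + (\<Sum>(c, m)\<leftarrow>filter (\<lambda>x. \<not> (case x of (c, m) \<Rightarrow> m = 1 # w)) (hpr w [1]). f c m)"
    by (rule sum_list_filter_split)
  also have "(\<Sum>(c, m)\<leftarrow>filter (\<lambda>(c, m). m = 1 # w) (hpr w [1]). f c m) = f (of_nat (Suc (lead w))) (1 # w)"
    using hpr_one_count[OF pw] by (subst g) auto
  finally show ?thesis by (simp add: case_prod_unfold)
qed

definition hh :: "nat \<Rightarrow> real" where "hh N = G N [1]"

lemma hh_eq: "hh N = (\<Sum>m\<in>{1..<N}. 1 / real m)" by (simp add: hh_def)

lemma hh_nonneg: "0 \<le> hh N" unfolding hh_eq by (rule sum_nonneg) auto

lemma FF_one: "FF N [1] = - hh N" by (simp add: FF_def hh_def)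

lemma hh_at_top: "filterlim hh at_top sequentially"
proof -
  have "hh (Suc n) = harm n" for n
    unfolding hh_eq harm_def by (rule sum.cong) (auto simp: field_simps)
  then show ?thesis using harm_at_top filterlim_sequentially_Suc[of hh] by simp
qed

lemma poly_hh_zero: assumes "(\<lambda>N. poly p (hh N)) \<longlonglongrightarrow> 0" shows "p = 0"
proof (rule ccontr)
  assume "p \<noteq> 0"
  obtain a p' where p: "p = pCons a p'" by (cases p) auto
  show False
  proof (cases "p' = 0")
    case True
    then have "(\<lambda>N. a) \<longlonglongrightarrow> 0" using assms p by simp
    then have "a = 0" by (simp add: LIMSEQ_const_iff)
    then show False using \<open>p \<noteq> 0\<close> p True by simp
  next
    case False
    obtain r where r: "\<And>z::real. r \<le> norm z \<Longrightarrow> 1 \<le> norm (poly (pCons a p') z)"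
      using poly_infinity[OF False, of 1 a] by blast
    have "eventually (\<lambda>N. r \<le> hh N) sequentially"
      using hh_at_top by (simp add: filterlim_at_top)
    moreover have "eventually (\<lambda>N. dist (poly p (hh N)) 0 < 1) sequentially"
      using tendstoD[OF assms, of 1] by simp
    ultimately have "eventually (\<lambda>N. False) sequentially"
    proof (rule eventually_elim2)
      fix N assume "r \<le> hh N" "dist (poly p (hh N)) 0 < 1"
      moreover have "r \<le> norm (hh N)" using \<open>r \<le> hh N\<close> hh_nonneg[of N] by simp
      ultimately show False using r[of "hh N"] p by simp
    qed
    then show False by simp
  qed
qed

definition Good :: "(nat \<Rightarrow> real) \<Rightarrow> real poly \<Rightarrow> bool" where
  "Good f p \<longleftrightarrow> (\<forall>q. (\<lambda>N. (f N - poly p (hh N)) * poly q (hh N)) \<longlonglongrightarrow> 0)"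

lemma Good_0: "Good f p \<Longrightarrow> (\<lambda>N. f N - poly p (hh N)) \<longlonglongrightarrow> 0"
  unfolding Good_def by (drule spec[of _ 1]) simp

lemma Good_unique: assumes "Good f p" "Good f p'" shows "p = p'"
proof -
  have "(\<lambda>N. (f N - poly p (hh N)) - (f N - poly p' (hh N))) \<longlonglongrightarrow> 0 - 0"
    by (intro tendsto_diff Good_0 assms)
  then have "(\<lambda>N. poly (p' - p) (hh N)) \<longlonglongrightarrow> 0" by simp
  then have "p' - p = 0" by (rule poly_hh_zero)
  then show ?thesis by simp
qed

lemma Good_poly: "Good (\<lambda>N. poly p (hh N)) p" by (simp add: Good_def)

lemma Good_cong: "Good f p \<Longrightarrow> (\<And>N. f N = g N) \<Longrightarrow> Good g p"
  by (metis ext)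

lemma Good_add: assumes "Good f p" "Good g r" shows "Good (\<lambda>N. f N + g N) (p + r)"
  unfolding Good_def
proof
  fix q
  have "(\<lambda>N. (f N - poly p (hh N)) * poly q (hh N) + (g N - poly r (hh N)) * poly q (hh N)) \<longlonglongrightarrow> 0 + 0"
    using assms unfolding Good_def by (intro tendsto_add) auto
  then show "(\<lambda>N. (f N + g N - poly (p + r) (hh N)) * poly q (hh N)) \<longlonglongrightarrow> 0"
    by (simp add: algebra_simps)
qed

lemma Good_scale: assumes "Good f p" shows "Good (\<lambda>N. c * f N) (smult c p)"
  unfolding Good_def
proof
  fix q
  have "(\<lambda>N. c * ((f N - poly p (hh N)) * poly q (hh N))) \<longlonglongrightarrow> c * 0"
    using assms unfolding Good_def by (intro tendsto_mult) auto
  then show "(\<lambda>N. (c * f N - poly (smult c p) (hh N)) * poly q (hh N)) \<longlonglongrightarrow> 0"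
    by (simp add: algebra_simps)
qed

lemma Good_neg: "Good f p \<Longrightarrow> Good (\<lambda>N. - f N) (- p)"
  using Good_scale[of f p "-1"] by simp

lemma Good_diff: "Good f p \<Longrightarrow> Good g r \<Longrightarrow> Good (\<lambda>N. f N - g N) (p - r)"
  using Good_add[of f p "\<lambda>N. - g N" "- r"] Good_neg[of g r] by simp

lemma Good_mult: assumes f: "Good f p" and g: "Good g r" shows "Good (\<lambda>N. f N * g N) (p * r)"
  unfolding Good_def
proof
  fix q
  let ?a = "\<lambda>N. f N - poly p (hh N)" and ?b = "\<lambda>N. g N - poly r (hh N)"
  have "(\<lambda>N. ?a N * (?b N * poly q (hh N)) + ?a N * poly (r * q) (hh N) + ?b N * poly (p * q) (hh N))
      \<longlonglongrightarrow> 0 * 0 + 0 + 0"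
    using f[unfolded Good_def, rule_format, of "r * q"] g[unfolded Good_def, rule_format, of "p * q"]
      g[unfolded Good_def, rule_format, of q]
    by (intro tendsto_add tendsto_mult Good_0 f) auto
  then show "(\<lambda>N. (f N * g N - poly (p * r) (hh N)) * poly q (hh N)) \<longlonglongrightarrow> 0"
    by (simp add: algebra_simps)
qed

lemma Good_LF: "(\<And>c m. (c, m) \<in> set xs \<Longrightarrow> Good (\<lambda>N. X N m) (P m)) \<Longrightarrow>
   Good (\<lambda>N. LF (X N) xs) (\<Sum>(c, m)\<leftarrow>xs. smult (of_rat c) (P m))"
proof (induction xs)
  case Nil then show ?case using Good_poly[of 0] by (simp add: LF_def)
next
  case (Cons x xs)
  obtain c m where x: "x = (c, m)" by (cases x)
  have "Good (\<lambda>N. of_rat c * X N m + LF (X N) xs) (smult (of_rat c) (P m) + (\<Sum>(c, m)\<leftarrow>xs. smult (of_rat c) (P m)))"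
    using Cons by (intro Good_add Good_scale) (auto simp: x)
  then show ?case by (simp add: x LF_def)
qed


lemma hh_Suc_harm: "hh (Suc n) = harm n"
  unfolding hh_eq harm_def by (rule sum.cong) (auto simp: field_simps)

lemma hh_le_ln: "hh m \<le> 1 + ln (real m + 1)"
proof (cases m)
  case 0 then show ?thesis by (simp add: hh_eq)
next
  case (Suc n)
  have "harm (Suc n) - ln (real (Suc n)) \<le> harm 1 - ln (real 1)"
    by (rule euler_mascheroni_sequence_decreasing) auto
  then have h1: "harm (Suc n) \<le> 1 + ln (real (Suc n))" by (simp add: harm_def)
  have "hh m = harm n" using Suc by (simp add: hh_Suc_harm)
  also have "\<dots> \<le> harm (Suc n)" by (rule harm_mono) simp
  also have "\<dots> \<le> 1 + ln (real (Suc n))" by (rule h1)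
  also have "\<dots> \<le> 1 + ln (real m + 1)" using Suc by simp
  finally show ?thesis .
qed

lemma hh_mono: "m \<le> n \<Longrightarrow> hh m \<le> hh n"
  unfolding hh_eq by (rule sum_mono2) auto

lemma G_nonneg: "0 \<le> G N r"
  by (induction r arbitrary: N) (auto intro!: sum_nonneg divide_nonneg_nonneg)

lemma G_mono: "m \<le> n \<Longrightarrow> G m r \<le> G n r"
proof (cases r)
  case (Cons a r')
  assume "m \<le> n"
  then show ?thesis unfolding Cons by (simp del: G.simps(1)) (rule sum_mono2, auto intro: divide_nonneg_nonneg G_nonneg)
qed simp

lemma G_le_hh: "pos r \<Longrightarrow> G N r \<le> hh N ^ length r"
proof (induction r arbitrary: N)
  case Nil then show ?case by simp
next
  case (Cons b r)
  have "G N (b # r) = (\<Sum>m\<in>{1..<N}. G m r / real m ^ b)" by simp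
  also have "\<dots> \<le> (\<Sum>m\<in>{1..<N}. hh N ^ length r * (1 / real m))"
  proof (rule sum_mono)
    fix m assume m: "m \<in> {1..<N}"
    have "G m r \<le> hh m ^ length r" using Cons by simp
    also have "\<dots> \<le> hh N ^ length r" using m by (intro power_mono hh_mono hh_nonneg) auto
    finally have A: "G m r \<le> hh N ^ length r" .
    have "real m ^ 1 \<le> real m ^ b" by (rule power_increasing) (use m Cons.prems in auto)
    then have B: "real m \<le> real m ^ b" by simp
    have "G m r / real m ^ b \<le> G m r / real m"
      using m B by (intro divide_left_mono G_nonneg) auto
    also have "\<dots> \<le> hh N ^ length r * (1 / real m)" using A m by (simp add: divide_right_mono)
    finally show "G m r / real m ^ b \<le> hh N ^ length r * (1 / real m)" .
  qed
  also have "\<dots> = hh N ^ length r * (\<Sum>m\<in>{1..<N}. 1 / real m)" by (rule sum_distrib_left[symmetric])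
  also have "\<dots> = hh N ^ length (b # r)" by (simp only: hh_eq[symmetric]) simp
  finally show ?case .
qed

lemma poly_bound: fixes q :: "real poly" and x :: real assumes "0 \<le> x" shows "\<bar>poly q x\<bar> \<le> (\<Sum>i\<le>degree q. \<bar>coeff q i\<bar>) * (1 + x) ^ degree q"
proof -
  have "\<bar>poly q x\<bar> = \<bar>\<Sum>i\<le>degree q. coeff q i * x ^ i\<bar>" unfolding poly_altdef ..
  also have "\<dots> \<le> (\<Sum>i\<le>degree q. \<bar>coeff q i * x ^ i\<bar>)" by (rule sum_abs)
  also have "\<dots> \<le> (\<Sum>i\<le>degree q. \<bar>coeff q i\<bar> * (1 + x) ^ degree q)"
  proof (rule sum_mono)
    fix i assume "i \<in> {..degree q}"
    then have i: "i \<le> degree q" by simp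
    have "x ^ i \<le> (1 + x) ^ i" using assms by (intro power_mono) auto
    also have "\<dots> \<le> (1 + x) ^ degree q" using assms i by (intro power_increasing) auto
    finally have "x ^ i \<le> (1 + x) ^ degree q" .
    then show "\<bar>coeff q i * x ^ i\<bar> \<le> \<bar>coeff q i\<bar> * (1 + x) ^ degree q"
      using assms by (simp add: abs_mult mult_left_mono)
  qed
  also have "\<dots> = (\<Sum>i\<le>degree q. \<bar>coeff q i\<bar>) * (1 + x) ^ degree q" by (simp add: sum_distrib_right)
  finally show ?thesis .
qed

lemma hh_growth: "\<exists>C. \<forall>m\<ge>1. (1 + hh m) ^ K \<le> C * real m powr (1/2)"
proof -
  define e :: real where "e = 1 / (2 * real K + 2)"
  have e0: "0 < e" by (simp add: e_def)
  define C where "C = (2 + 1 / e) ^ K * 2 powr (1/2)"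
  have "(1 + hh m) ^ K \<le> C * real m powr (1/2)" if m: "m \<ge> 1" for m
  proof -
    define x where "x = real m + 1"
    have x1: "1 \<le> x" by (simp add: x_def)
    have xe: "1 \<le> x powr e" using x1 e0 by (intro ge_one_powr_ge_zero) auto
    have "ln x \<le> x powr e / e" using x1 e0 by (rule ln_powr_bound)
    then have "1 + hh m \<le> 2 * x powr e + x powr e / e"
      using hh_le_ln[of m] xe by (simp add: x_def)
    also have "\<dots> = (2 + 1 / e) * x powr e" by (simp add: field_simps)
    finally have b1: "1 + hh m \<le> (2 + 1 / e) * x powr e" .
    have "(1 + hh m) ^ K \<le> ((2 + 1 / e) * x powr e) ^ K"
      using b1 hh_nonneg[of m] by (intro power_mono) auto
    also have "\<dots> = (2 + 1 / e) ^ K * x powr (real K * e)"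
      using x1 by (simp add: power_mult_distrib powr_power)
    also have "x powr (real K * e) \<le> x powr (1/2)"
      using x1 by (intro powr_mono) (auto simp: e_def field_simps)
    also have "x powr (1/2) \<le> (2 * real m) powr (1/2)"
      using m by (intro powr_mono2) (auto simp: x_def)
    also have "\<dots> = 2 powr (1/2) * real m powr (1/2)" by (simp add: powr_mult)
    finally show ?thesis using e0 by (simp add: C_def mult_left_mono mult.assoc)
  qed
  then show ?thesis by blast
qed

definition bb :: "nat \<Rightarrow> nat \<Rightarrow> real" where "bb K m = (1 + hh m) ^ K / real m ^ 2"

lemma bb_nonneg: "0 \<le> bb K m" unfolding bb_def using hh_nonneg[of m] by simp

lemma summable_bb: "summable (bb K)"
proof -
  obtain C where C: "\<And>m. m \<ge> 1 \<Longrightarrow> (1 + hh m) ^ K \<le> C * real m powr (1/2)"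
    using hh_growth[of K] by blast
  have s: "summable (\<lambda>m. C * real m powr (- 3 / 2))"
    by (intro summable_mult) (simp add: summable_real_powr_iff)
  show ?thesis
  proof (rule summable_comparison_test'[OF s])
    fix m :: nat assume m: "m \<ge> 1"
    have "norm (bb K m) = (1 + hh m) ^ K / real m ^ 2" using bb_nonneg[of K m] unfolding bb_def real_norm_def by (rule abs_of_nonneg)
    also have "\<dots> \<le> C * real m powr (1/2) / real m ^ 2"
      using C[OF m] m by (intro divide_right_mono) auto
    also have "\<dots> = C * real m powr (- 3 / 2)"
    proof -
      have e1: "real m powr (1/2 - 2) = real m powr (1/2) / real m powr 2" by (rule powr_diff)
      have e2: "real m powr 2 = real m ^ 2" using m by (simp add: powr_numeral)
      have e3: "(1/2 - 2 :: real) = - 3 / 2" by simp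
      have "real m powr (1/2) / real m ^ 2 = real m powr (- 3 / 2)" using e1 e2 e3 by simp
      then show ?thesis by (metis times_divide_eq_right)
    qed
    finally show "norm (bb K m) \<le> C * real m powr (- 3 / 2)" .
  qed
qed

definition AA :: "nat list \<Rightarrow> nat list set" where
  "AA k = {n. length n = length k \<and> sorted_wrt (<) n \<and> (\<forall>x\<in>set n. 0 < x)}"

definition SS :: "nat list \<Rightarrow> nat \<Rightarrow> nat list set" where
  "SS k N = {n \<in> AA k. \<forall>x\<in>set n. x < N}"

definition ff :: "nat list \<Rightarrow> nat list \<Rightarrow> real" where
  "ff k n = (\<Prod>i<length k. 1 / real (n ! i) ^ (k ! i))"

lemma mzv_AA: "mzv k = infsum (ff k) (AA k)"
  unfolding mzv_def AA_def ff_def ..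

lemma finite_SS: "finite (SS k N)"
proof -
  have "SS k N \<subseteq> {n. set n \<subseteq> {..<N} \<and> length n = length k}"
    unfolding SS_def AA_def by auto
  moreover have "finite {n. set n \<subseteq> {..<N} \<and> length n = length k}"
    by (rule finite_lists_length_eq) simp
  ultimately show ?thesis by (rule finite_subset)
qed

lemma ff_snoc: "length n = length k \<Longrightarrow> ff (k @ [a]) (n @ [m]) = ff k n * (1 / real m ^ a)"
  unfolding ff_def by (simp add: prod.lessThan_Suc nth_append)

lemma SS_snoc: "SS (k @ [a]) N = (\<lambda>(m, n). n @ [m]) ` (SIGMA m:{1..<N}. SS k m)"
proof (rule set_eqI)
  fix x
  show "x \<in> SS (k @ [a]) N \<longleftrightarrow> x \<in> (\<lambda>(m, n). n @ [m]) ` (SIGMA m:{1..<N}. SS k m)"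
  proof
    assume x: "x \<in> SS (k @ [a]) N"
    then obtain n m where xnm: "x = n @ [m]"
      by (cases x rule: rev_cases) (auto simp: SS_def AA_def)
    then show "x \<in> (\<lambda>(m, n). n @ [m]) ` (SIGMA m:{1..<N}. SS k m)"
      using x by (auto simp: SS_def AA_def sorted_wrt_append image_iff)
  next
    assume "x \<in> (\<lambda>(m, n). n @ [m]) ` (SIGMA m:{1..<N}. SS k m)"
    then show "x \<in> SS (k @ [a]) N"
      by (auto simp: SS_def AA_def sorted_wrt_append) (metis less_trans)
  qed
qed

lemma SS_sum: "sum (ff k) (SS k N) = G N (rev k)"
proof (induction k arbitrary: N rule: rev_induct)
  case Nil
  have "SS [] N = {[]}" by (auto simp: SS_def AA_def)
  then show ?case by (simp add: ff_def)
next
  case (snoc a k)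
  have inj: "inj_on (\<lambda>(m, n). n @ [m]) (SIGMA m:{1..<N}. SS k m)"
    by (auto simp: inj_on_def)
  have "sum (ff (k @ [a])) (SS (k @ [a]) N) = (\<Sum>(m, n)\<in>(SIGMA m:{1..<N}. SS k m). ff (k @ [a]) (n @ [m]))"
    unfolding SS_snoc by (subst sum.reindex[OF inj]) (simp add: case_prod_unfold)
  also have "\<dots> = (\<Sum>m\<in>{1..<N}. \<Sum>n\<in>SS k m. ff (k @ [a]) (n @ [m]))"
    by (rule sum.Sigma[symmetric]) (auto simp: finite_SS)
  also have "\<dots> = (\<Sum>m\<in>{1..<N}. \<Sum>n\<in>SS k m. ff k n * (1 / real m ^ a))"
    by (intro sum.cong refl) (simp add: ff_snoc SS_def AA_def)
  also have "\<dots> = (\<Sum>m\<in>{1..<N}. G m (rev k) / real m ^ a)"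
    by (simp add: snoc.IH[symmetric] sum_divide_distrib)
  also have "\<dots> = G N (rev (k @ [a]))" by simp
  finally show ?case .
qed

lemma ff_nonneg: "0 \<le> ff k n"
  unfolding ff_def by (rule prod_nonneg) simp

lemma SS_cover: "finite X \<Longrightarrow> X \<subseteq> AA k \<Longrightarrow> N0 \<le> N \<Longrightarrow> N0 = Suc (\<Sum>n\<in>X. sum_list n) \<Longrightarrow> X \<subseteq> SS k N"
proof
  fix n assume X: "finite X" "X \<subseteq> AA k" "N0 \<le> N" "N0 = Suc (\<Sum>n\<in>X. sum_list n)" and n: "n \<in> X"
  have "\<forall>x\<in>set n. x < N"
  proof
    fix x assume "x \<in> set n"
    then have "x \<le> sum_list n" by (simp add: member_le_sum_list)
    also have "\<dots> \<le> (\<Sum>n\<in>X. sum_list n)" using X n by (intro member_le_sum) auto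
    finally show "x < N" using X by simp
  qed
  then show "n \<in> SS k N" using X n by (auto simp: SS_def)
qed

lemma mzv_lim:
  assumes lim: "(\<lambda>N. G N (rev k)) \<longlonglongrightarrow> T" and bd: "\<And>N. G N (rev k) \<le> T"
  shows "mzv k = T"
proof -
  have bdd: "bdd_above (sum (ff k) ` {F. F \<subseteq> AA k \<and> finite F})"
  proof (rule bdd_aboveI2)
    fix F assume F: "F \<in> {F. F \<subseteq> AA k \<and> finite F}"
    define N where "N = Suc (\<Sum>n\<in>F. sum_list n)"
    have "F \<subseteq> SS k N" using F by (intro SS_cover[of F k N N]) (auto simp: N_def)
    then have "sum (ff k) F \<le> sum (ff k) (SS k N)"
      by (intro sum_mono2 finite_SS ff_nonneg)
    also have "\<dots> \<le> T" using bd by (simp add: SS_sum)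
    finally show "sum (ff k) F \<le> T" .
  qed
  have summ: "ff k summable_on AA k"
    by (rule nonneg_bdd_above_summable_on[OF _ bdd]) (simp add: ff_nonneg)
  then have hs: "(sum (ff k) \<longlongrightarrow> infsum (ff k) (AA k)) (finite_subsets_at_top (AA k))"
    using has_sum_infsum[OF summ] by (simp add: has_sum_def)
  have fl: "filterlim (SS k) (finite_subsets_at_top (AA k)) sequentially"
    unfolding filterlim_finite_subsets_at_top
  proof (intro allI impI)
    fix X assume X: "finite X \<and> X \<subseteq> AA k"
    show "eventually (\<lambda>N. finite (SS k N) \<and> X \<subseteq> SS k N \<and> SS k N \<subseteq> AA k) sequentially"
      unfolding eventually_sequentially
    proof (intro exI[of _ "Suc (\<Sum>n\<in>X. sum_list n)"] allI impI conjI)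
      fix N assume "Suc (\<Sum>n\<in>X. sum_list n) \<le> N"
      then show "X \<subseteq> SS k N" using X by (intro SS_cover[of X k _ N]) auto
    qed (auto simp: finite_SS[unfolded SS_def] SS_def)
  qed
  have "(\<lambda>N. sum (ff k) (SS k N)) \<longlonglongrightarrow> infsum (ff k) (AA k)"
    by (rule filterlim_compose[OF hs fl])
  then have "(\<lambda>N. G N (rev k)) \<longlonglongrightarrow> infsum (ff k) (AA k)" by (simp add: SS_sum)
  then have "infsum (ff k) (AA k) = T" using lim by (rule LIMSEQ_unique)
  then show ?thesis by (simp add: mzv_AA)
qed

lemma Good_adm': assumes pr: "pos r" and l0: "lead r = 0" and ne: "r \<noteq> []"
  shows "Good (\<lambda>N. FF N r) [:(-1) ^ length r * mzv (rev r):]"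
proof -
  obtain a r' where r: "r = a # r'" using ne by (cases r) auto
  have a2: "2 \<le> a" using pr l0 r by (auto split: if_splits)
  have pr': "pos r'" using pr r by simp
  define L where "L = length r'"
  define g where "g m = G m r' / real m ^ a" for m
  have g0: "g 0 = 0" using a2 by (simp add: g_def)
  have g_nonneg: "0 \<le> g m" for m by (simp add: g_def G_nonneg)
  have G_sum: "G N r = (\<Sum>m<N. g m)" for N
  proof -
    have "(\<Sum>m<N. g m) = (\<Sum>m\<in>{1..<N}. g m)"
      by (rule sum.mono_neutral_right) (auto simp: g0 Suc_le_eq)
    then show ?thesis by (simp add: r g_def)
  qed
  have g_bb: "g m * (1 + hh N) ^ D \<le> bb (L + D) m" if "N \<le> m" for m N D
  proof (cases "m = 0")
    case True then show ?thesis by (simp add: g0 bb_def)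
  next
    case False
    have "G m r' \<le> hh m ^ L" using G_le_hh[OF pr'] by (simp add: L_def)
    also have "\<dots> \<le> (1 + hh m) ^ L" using hh_nonneg[of m] by (intro power_mono) auto
    finally have A: "G m r' \<le> (1 + hh m) ^ L" .
    have B: "(1 + hh N) ^ D \<le> (1 + hh m) ^ D"
      using that hh_nonneg[of N] by (intro power_mono hh_mono) (auto intro: hh_mono)
    have "real m ^ 2 \<le> real m ^ a" using False a2 by (intro power_increasing) auto
    then have C: "1 / real m ^ a \<le> 1 / real m ^ 2" using False by (intro divide_left_mono) auto
    have "g m * (1 + hh N) ^ D = G m r' * (1 / real m ^ a) * (1 + hh N) ^ D" by (simp add: g_def)
    also have "\<dots> \<le> (1 + hh m) ^ L * (1 / real m ^ 2) * (1 + hh m) ^ D"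
      using A B C hh_nonneg[of N] G_nonneg[of m r']
      by (intro mult_mono) (auto intro!: mult_nonneg_nonneg)
    also have "\<dots> = bb (L + D) m" by (simp add: bb_def power_add)
    finally show ?thesis .
  qed
  have summ_g: "summable g"
  proof (rule summable_comparison_test'[OF summable_bb[of L]])
    fix m :: nat assume "m \<ge> 0"
    show "norm (g m) \<le> bb L m" using g_bb[of 0 m 0] g_nonneg[of m] by simp
  qed
  define T where "T = suminf g"
  have limG: "(\<lambda>N. G N r) \<longlonglongrightarrow> T" unfolding G_sum T_def using summ_g by (rule summable_LIMSEQ)
  have bdG: "G N r \<le> T" for N unfolding G_sum T_def using summ_g g_nonneg by (intro sum_le_suminf) auto
  have mz: "mzv (rev r) = T" by (rule mzv_lim) (use limG bdG in simp_all)
  show ?thesis unfolding Good_def mz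
  proof
    fix q :: "real poly"
    define D where "D = degree q"
    define Aq where "Aq = (\<Sum>i\<le>degree q. \<bar>coeff q i\<bar>)"
    define K where "K = L + D"
    define S where "S = suminf (bb K)"
    have Aq0: "0 \<le> Aq" by (simp add: Aq_def sum_nonneg)
    have bound: "norm ((FF N r - poly [:(-1) ^ length r * T:] (hh N)) * poly q (hh N)) \<le> Aq * (S - (\<Sum>i<N. bb K i))" for N
    proof -
      have tail: "T - G N r = (\<Sum>n. g (n + N))"
        using suminf_split_initial_segment[OF summ_g, of N] by (simp add: T_def G_sum)
      have "norm ((FF N r - poly [:(-1) ^ length r * T:] (hh N)) * poly q (hh N)) = (T - G N r) * \<bar>poly q (hh N)\<bar>"
      proof -
        have e: "(FF N r - poly [:(-1) ^ length r * T:] (hh N)) * poly q (hh N) = (-1) ^ length r * ((G N r - T) * poly q (hh N))"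
          by (simp add: FF_def algebra_simps)
        have "\<bar>G N r - T\<bar> = T - G N r" using bdG[of N] by simp
        then show ?thesis unfolding e real_norm_def abs_mult by (simp add: power_abs)
      qed
      also have "\<dots> \<le> (T - G N r) * (Aq * (1 + hh N) ^ D)"
        using bdG[of N] poly_bound[OF hh_nonneg[of N], of q] by (intro mult_left_mono) (auto simp: Aq_def D_def)
      also have "\<dots> = Aq * (\<Sum>n. g (n + N) * (1 + hh N) ^ D)"
        unfolding tail using summ_g by (subst suminf_mult2[symmetric]) (auto simp: algebra_simps)
      also have "\<dots> \<le> Aq * (\<Sum>n. bb K (n + N))"
        using summ_g summable_bb[of K] g_bb Aq0
        by (intro mult_left_mono suminf_le) (auto simp: K_def intro!: summable_mult2)
      also have "(\<Sum>n. bb K (n + N)) = S - (\<Sum>i<N. bb K i)"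
        using suminf_split_initial_segment[OF summable_bb[of K], of N] by (simp add: S_def)
      finally show ?thesis .
    qed
    have "(\<lambda>N. Aq * (S - (\<Sum>i<N. bb K i))) \<longlonglongrightarrow> Aq * (S - S)"
      unfolding S_def by (intro tendsto_intros summable_LIMSEQ summable_bb)
    then have "(\<lambda>N. Aq * (S - (\<Sum>i<N. bb K i))) \<longlonglongrightarrow> 0" by simp
    then show "(\<lambda>N. (FF N r - poly [:(-1) ^ length r * T:] (hh N)) * poly q (hh N)) \<longlonglongrightarrow> 0"
      by (rule Lim_null_comparison[rotated]) (rule always_eventually, rule allI, rule bound)
  qed
qed

lemma Good_adm: "pos r \<Longrightarrow> lead r = 0 \<Longrightarrow> r \<noteq> [] \<Longrightarrow> Good (\<lambda>N. FF N r) [:(-1) ^ length r * mzv (rev r):]"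
  by (rule Good_adm')

lemma Good_FF1: "Good (\<lambda>N. FF N [1]) [:0,-1:]"
  using Good_poly[of "[:0,-1:]"] by (rule Good_cong) (simp add: FF_def hh_def)

lemma Good_exists: "pos r \<Longrightarrow> \<exists>p. Good (\<lambda>N. FF N r) p"
proof (induction "lead r" arbitrary: r rule: less_induct)
  case less
  show ?case
  proof (cases "lead r")
    case 0
    show ?thesis
    proof (cases "r = []")
      case True then show ?thesis using Good_poly[of 1] by (intro exI[of _ 1]) simp
    next
      case False then show ?thesis using Good_adm less.prems 0 by blast
    qed
  next
    case (Suc j)
    then obtain w where r: "r = 1 # w" and lw: "lead w = j"
      by (cases r; simp split: if_splits)
    have pw: "pos w" using less.prems r by simp
    note G1 = Good_FF1
    show ?thesis
    proof (cases "w = []")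
      case True
      show ?thesis unfolding r True using G1 by blast
    next
      case False
      define rest where "rest = filter (\<lambda>(c, m). m \<noteq> 1 # w) (hpr w [1])"
      have IHr: "\<exists>p. Good (\<lambda>N. FF N m) p" if "(c, m) \<in> set rest" for c m
      proof -
        have "(c, m) \<in> set (hpr w [1])" "m \<noteq> 1 # w" using that by (auto simp: rest_def)
        moreover have "pos [1]" by simp
        ultimately have "lead m \<le> lead w" "pos m" using hpr_one_lead[OF pw] hpr_pos[OF pw \<open>pos [1]\<close>] by auto
        then show ?thesis using less.hyps[of m] Suc lw by simp
      qed
      define P where "P m = (SOME p. Good (\<lambda>N. FF N m) p)" for m
      have GP: "Good (\<lambda>N. FF N m) (P m)" if "(c, m) \<in> set rest" for c m
        using IHr[OF that] unfolding P_def by (rule someI_ex)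
      obtain pw' where Gw: "Good (\<lambda>N. FF N w) pw'" using less.hyps[of w] Suc lw pw by auto
      have split: "LF (FF N) (hpr w [1]) = of_nat (Suc j) * FF N (1 # w) + LF (FF N) rest" for N
        unfolding LF_def rest_def using hpr_one_split[of "\<lambda>c m. of_rat c * FF N m", OF _ pw] lw
        by (simp add: of_rat_add algebra_simps)
      have eq: "FF N (1 # w) = (1 / of_nat (Suc j)) * (FF N w * FF N [1] - LF (FF N) rest)" for N
        using split[of N] trunc_hom[of N w "[1]"] by (simp add: field_simps)
      have "Good (\<lambda>N. (1 / of_nat (Suc j)) * (FF N w * FF N [1] - LF (FF N) rest))
         (smult (1 / of_nat (Suc j)) (pw' * [:0,-1:] - (\<Sum>(c, m)\<leftarrow>rest. smult (of_rat c) (P m))))"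
        by (rule Good_scale, rule Good_diff, rule Good_mult[OF Gw G1], rule Good_LF, rule GP)
      then have "Good (\<lambda>N. FF N (1 # w))
         (smult (1 / of_nat (Suc j)) (pw' * [:0,-1:] - (\<Sum>(c, m)\<leftarrow>rest. smult (of_rat c) (P m))))"
        by (rule Good_cong) (rule eq[symmetric])
      then show ?thesis unfolding r by blast
    qed
  qed
qed

definition PP :: "nat list \<Rightarrow> real poly" where "PP r = (SOME p. Good (\<lambda>N. FF N r) p)"

lemma PP_good: "pos r \<Longrightarrow> Good (\<lambda>N. FF N r) (PP r)"
  unfolding PP_def using Good_exists by (rule someI_ex)

lemma PP_eq: "pos r \<Longrightarrow> Good (\<lambda>N. FF N r) p \<Longrightarrow> PP r = p"
  using PP_good Good_unique by blast

lemma PP_hom: assumes "pos r" "pos s"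
  shows "(\<Sum>(c, m)\<leftarrow>hpr r s. smult (of_rat c) (PP m)) = PP r * PP s"
proof -
  have "Good (\<lambda>N. LF (FF N) (hpr r s)) (\<Sum>(c, m)\<leftarrow>hpr r s. smult (of_rat c) (PP m))"
    by (rule Good_LF) (rule PP_good, rule hpr_pos[OF assms])
  moreover have "Good (\<lambda>N. LF (FF N) (hpr r s)) (PP r * PP s)"
    using Good_mult[OF PP_good[OF assms(1)] PP_good[OF assms(2)]] by (rule Good_cong) (simp add: trunc_hom)
  ultimately show ?thesis by (rule Good_unique)
qed

lemma PP_Nil: "PP [] = 1"
  by (rule PP_eq) (simp, rule Good_cong[OF Good_poly[of 1]], simp add: FF_def)

lemma PP_one: "PP [1] = [:0, -1:]"
  by (rule PP_eq) (simp, rule Good_FF1)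

lemma PP_one': "PP [Suc 0] = [:0, -1:]"
  using PP_one by simp

lemma PP_adm: "pos r \<Longrightarrow> lead r = 0 \<Longrightarrow> r \<noteq> [] \<Longrightarrow> PP r = [:(-1) ^ length r * mzv (rev r):]"
  by (rule PP_eq) (simp_all add: Good_adm)

lemma mzv_Nil: "mzv [] = 1"
proof -
  have "{n::nat list. length n = length ([]::nat list) \<and> sorted_wrt (<) n \<and> (\<forall>x\<in>set n. 0 < x)} = {[]}" by auto
  then show ?thesis unfolding mzv_def by simp
qed

lemma const_sign: "[:(-1) ^ n * x:] = (-1) ^ n * [:x::real:]"
  by (cases "even n") simp_all

definition Z0 :: "nat list \<Rightarrow> real poly" where "Z0 k = (if is_index k then PP (rev k) else 0)"

definition QQ :: "(nat list \<Rightarrow> real poly) \<Rightarrow> bool" where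
  "QQ Z \<longleftrightarrow> (\<forall>k. \<not> is_index k \<longrightarrow> Z k = 0)
      \<and> Z [] = 1
      \<and> (\<forall>k. is_index k \<and> admissible k \<longrightarrow> Z k = (-1) ^ length k * [:mzv k:])
      \<and> Z [1] = - [:0, 1:]
      \<and> (\<forall>k l. is_index k \<and> is_index l \<longrightarrow> lin_poly Z (hp k l) = Z k * Z l)"

lemma lead0_adm: "pos r \<Longrightarrow> lead r = 0 \<Longrightarrow> admissible (rev r)"
  by (cases r) (auto simp: admissible_def split: if_splits)

lemma adm_lead0: "pos r \<Longrightarrow> admissible (rev r) \<Longrightarrow> r \<noteq> [] \<Longrightarrow> lead r = 0"
  by (cases r) (auto simp: admissible_def)

lemma lin_poly_hp: "lin_poly Z (hp k l) = (\<Sum>(c, m)\<leftarrow>hpr (rev k) (rev l). smult (of_rat c) (Z (rev m)))"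
  by (simp add: lin_poly_def hp_def case_prod_unfold o_def)

lemma QQ_Z0: "QQ Z0"
  unfolding QQ_def
proof (intro conjI allI impI)
  fix k assume "\<not> is_index k" then show "Z0 k = 0" by (simp add: Z0_def)
next
  show "Z0 [] = 1" by (simp add: Z0_def is_index_def PP_Nil)
next
  fix k assume k: "is_index k \<and> admissible k"
  show "Z0 k = (-1) ^ length k * [:mzv k:]"
  proof (cases "k = []")
    case True then show ?thesis by (simp add: Z0_def is_index_def PP_Nil mzv_Nil)
  next
    case False
    have "PP (rev k) = [:(-1) ^ length k * mzv k:]"
      using PP_adm[of "rev k"] adm_lead0[of "rev k"] k False by (simp add: is_index_pos)
    then show ?thesis using k by (simp add: Z0_def const_sign)
  qed
next
  show "Z0 [1] = - [:0, 1:]" by (simp add: Z0_def is_index_def PP_one PP_one')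
next
  fix k l assume kl: "is_index k \<and> is_index l"
  have "lin_poly Z0 (hp k l) = (\<Sum>(c, m)\<leftarrow>hpr (rev k) (rev l). smult (of_rat c) (PP m))"
    unfolding lin_poly_hp
    by (rule arg_cong[where f=sum_list], rule map_cong, simp)
      (use kl hpr_pos[of "rev k" "rev l"] in \<open>auto simp: Z0_def is_index_pos\<close>)
  also have "\<dots> = PP (rev k) * PP (rev l)"
    using kl by (intro PP_hom) (simp_all add: is_index_pos)
  finally show "lin_poly Z0 (hp k l) = Z0 k * Z0 l" using kl by (simp add: Z0_def)
qed

lemma QQ_unique: assumes Q: "QQ Z" shows "Z = Z0"
proof -
  have main: "pos r \<Longrightarrow> Z (rev r) = PP r" for r
  proof (induction "lead r" arbitrary: r rule: less_induct)
    case less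
    show ?case
    proof (cases "lead r")
      case 0
      show ?thesis
      proof (cases "r = []")
        case True then show ?thesis using Q by (simp add: QQ_def PP_Nil)
      next
        case False
        have "admissible (rev r)" "is_index (rev r)" using lead0_adm less.prems 0 by (auto simp: is_index_pos)
        then have "Z (rev r) = (-1) ^ length r * [:mzv (rev r):]" using Q by (simp add: QQ_def)
        then show ?thesis using PP_adm[OF less.prems 0 False] by (simp add: const_sign)
      qed
    next
      case (Suc j)
      then obtain w where r: "r = 1 # w" and lw: "lead w = j"
        by (cases r; simp split: if_splits)
      have pw: "pos w" using less.prems r by simp
      show ?thesis
      proof (cases "w = []")
        case True
        then show ?thesis using Q r by (simp add: QQ_def PP_one PP_one')
      next
        case False
        define rest where "rest = filter (\<lambda>(c, m). m \<noteq> 1 # w) (hpr w [1])"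
        have p1: "pos [1]" by simp
        have rest_eq: "(\<Sum>(c, m)\<leftarrow>rest. smult (of_rat c) (Z (rev m))) = (\<Sum>(c, m)\<leftarrow>rest. smult (of_rat c) (PP m))"
        proof (rule arg_cong[where f=sum_list], rule map_cong, simp)
          fix x assume x: "x \<in> set rest"
          obtain c m where xcm: "x = (c, m)" by (cases x)
          have "(c, m) \<in> set (hpr w [1])" "m \<noteq> 1 # w" using x xcm by (auto simp: rest_def)
          then have "lead m \<le> lead w" "pos m" using hpr_one_lead[OF pw] hpr_pos[OF pw p1] by auto
          then have "Z (rev m) = PP m" using less.hyps[of m] Suc lw by simp
          then show "(case x of (c, m) \<Rightarrow> smult (of_rat c) (Z (rev m))) = (case x of (c, m) \<Rightarrow> smult (of_rat c) (PP m))"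
            by (simp add: xcm)
        qed
        have hZ: "lin_poly Z (hp (rev w) [1]) = Z (rev w) * Z [1]"
          using Q pw by (simp add: QQ_def is_index_pos)
        have sZ: "(\<Sum>(c, m)\<leftarrow>hpr w [1]. smult (of_rat c) (Z (rev m))) =
            smult (of_nat (Suc j)) (Z (rev (1 # w))) + (\<Sum>(c, m)\<leftarrow>rest. smult (of_rat c) (Z (rev m)))"
          unfolding rest_def using hpr_one_split[of "\<lambda>c m. smult (of_rat c) (Z (rev m))", OF _ pw] lw
          by (simp add: of_rat_add smult_add_left)
        have sP: "(\<Sum>(c, m)\<leftarrow>hpr w [1]. smult (of_rat c) (PP m)) =
            smult (of_nat (Suc j)) (PP (1 # w)) + (\<Sum>(c, m)\<leftarrow>rest. smult (of_rat c) (PP m))"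
          unfolding rest_def using hpr_one_split[of "\<lambda>c m. smult (of_rat c) (PP m)", OF _ pw] lw
          by (simp add: of_rat_add smult_add_left)
        have "Z (rev w) = PP w" using less.hyps[of w] Suc lw pw by simp
        moreover have "Z [1] = PP [1]" using Q by (simp add: QQ_def PP_one PP_one')
        ultimately have "smult (of_nat (Suc j)) (Z (rev (1 # w))) = smult (of_nat (Suc j)) (PP (1 # w))"
          using hZ sZ sP rest_eq PP_hom[OF pw p1] by (simp add: lin_poly_hp)
        then have "smult (inverse (of_nat (Suc j))) (smult (of_nat (Suc j)) (Z (rev (1 # w)))) =
           smult (inverse (of_nat (Suc j))) (smult (of_nat (Suc j)) (PP (1 # w)))" by (rule arg_cong)
        then have "Z (rev (1 # w)) = PP (1 # w)" by (simp only: smult_smult) simp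
        then show ?thesis using r by simp
      qed
    qed
  qed
  show ?thesis
  proof
    fix k
    show "Z k = Z0 k"
    proof (cases "is_index k")
      case True
      then show ?thesis using main[of "rev k"] by (simp add: Z0_def is_index_pos)
    next
      case False then show ?thesis using Q by (simp add: QQ_def Z0_def)
    qed
  qed
qed

lemma Zstar_eq: "Zstar = Z0"
proof -
  have "Zstar = (THE Z. QQ Z)" unfolding Zstar_def QQ_def ..
  also have "\<dots> = Z0" using QQ_Z0 QQ_unique by (rule the_equality)
  finally show ?thesis .
qed

lemma Zstar_hom: "is_index k \<Longrightarrow> is_index l \<Longrightarrow> lin_poly Zstar (hp k l) = Zstar k * Zstar l"
  using QQ_Z0 unfolding Zstar_eq QQ_def by blast

lemma fc_neg1: "fps_const ((-1::real poly) ^ N) = (-1) ^ N"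
  by (cases "even N") simp_all

lemma kap_sign: "kap ((-1) ^ N * c) = (-1) ^ N * kap c"
  by (cases "even N") (simp_all add: kap_def of_rat_minus)

lemma neg1_sq: "(-1::'a::ring_1) ^ m * (-1) ^ m = 1"
  by (simp flip: power_add)

lemma sg_sum_kap: "sg (\<Sum>(c, m)\<leftarrow>xs. kap c * F m) = (\<Sum>(c, m)\<leftarrow>xs. kap c * sg (F m))"
  by (induction xs) (auto simp: sg_add sg_zero kap_def sg_const_mult)

lemma sum_kap_const: "(\<Sum>(c, m)\<leftarrow>xs. kap c * fps_const (g m)) = fps_const (\<Sum>(c, m)\<leftarrow>xs. smult (of_rat c) (g m))"
  by (induction xs) (auto simp: kap_def fps_const_add fps_const_mult)

lemma Zh_YZ: "pos u \<Longrightarrow> pos v \<Longrightarrow> Zh YZ u v = YZ u * YZ v"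
proof -
  assume "pos u" "pos v"
  have "Zh YZ u v = fps_const (lin_poly Zstar (hp (rev u) (rev v)))"
    unfolding Zh_def YZ_def sum_kap_const by (simp add: lin_poly_def hp_def case_prod_unfold o_def)
  also have "\<dots> = YZ u * YZ v"
    using Zstar_hom[of "rev u" "rev v"] \<open>pos u\<close> \<open>pos v\<close> by (simp add: is_index_pos YZ_def fps_const_mult)
  finally show ?thesis .
qed

theorem corollary2p5:
  fixes k l :: "nat list"
  assumes "is_index k" and "is_index l"
  shows "lin_shift (stuffle k l) = zeta_shift k * zeta_shift l"
proof -
  define r s where "r = rev k" and "s = rev l"
  have pr: "pos r" and ps: "pos s" using assms by (simp_all add: r_def s_def is_index_pos)
  have "lin_shift (stuffle k l) = (\<Sum>(c, m)\<leftarrow>hpr r s. kap ((-1) ^ (length k + length l + length m) * c) * zeta_shift (rev m))"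
    by (simp add: lin_shift_def stuffle_def hp_def kap_def case_prod_unfold o_def r_def s_def)
  also have "\<dots> = (\<Sum>(c, m)\<leftarrow>hpr r s. (-1) ^ (length k + length l) * (kap c * sg (psi YZ m)))"
  proof -
    have "\<And>c (m::nat list). kap ((-1) ^ (length k + length l + length m) * c) * zeta_shift (rev m) =
       (-1) ^ (length k + length l) * (kap c * sg (psi YZ m))"
    proof -
      fix c :: rat and m :: "nat list"
      have "(-1) ^ (length k + length l + length m) * (-1) ^ length m =
          ((-1) ^ (length k + length l) :: real poly fps)"
        by (simp add: power_add mult.assoc neg1_sq)
      then show "kap ((-1) ^ (length k + length l + length m) * c) * zeta_shift (rev m) =
       (-1) ^ (length k + length l) * (kap c * sg (psi YZ m))"
        by (simp add: kap_sign zeta_shift_psi fc_neg1)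
    qed
    then show ?thesis by (simp add: case_prod_unfold)
  qed
  also have "\<dots> = (-1) ^ (length k + length l) * sg (\<Sum>(c, m)\<leftarrow>hpr r s. kap c * psi YZ m)"
    unfolding sg_sum_kap by (simp add: sum_list_const_mult case_prod_unfold)
  also have "(\<Sum>(c, m)\<leftarrow>hpr r s. kap c * psi YZ m) = psi (\<lambda>u. psi (\<lambda>v. Zh YZ u v) s) r"
    by (rule psi_hom_formal)
  also have "\<dots> = psi (\<lambda>u. YZ u * psi YZ s) r"
  proof (rule psi_cong[OF pr])
    fix u assume "pos u"
    have "psi (\<lambda>v. Zh YZ u v) s = psi (\<lambda>v. YZ u * YZ v) s"
      by (rule psi_cong[OF ps]) (simp add: Zh_YZ \<open>pos u\<close>)
    then show "psi (\<lambda>v. Zh YZ u v) s = YZ u * psi YZ s" by (simp add: psi_cmult)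
  qed
  also have "\<dots> = psi YZ r * psi YZ s"
    using psi_cmult[of "psi YZ s" YZ r] by (simp add: mult.commute)
  finally show ?thesis
    by (simp add: zeta_shift_psi r_def s_def sg_mult power_add fc_neg1 algebra_simps)
qed

end
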